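(* For every $\Delta, m \in \mathbb{Z}_{>0}$, we have \[ h(\Delta,m) \leq h(1,m) + (\Delta-1)\cdot h_s^{\Delta}(m). \] In particular, $h(\Delta,m) \leq h(1,m) + (\Delta-1)\cdot h_s(m)$.
   Context: For a real matrix $A \in \mathbb{R}^{m\times n}$ and $1 \le k \le \min\{m,n\}$, let $\Delta_k(A)$ denote the maximum of $|\det(B)|$ over all $k\times k$ submatrices $B$ of $A$. A matrix is called totally $1$-submodular if every square submatrix (of every size) has determinant of absolute value at most $1$. The generalized Heller constant $h(\Delta,m)$ is the maximum $n$ such that some $A \in \mathbb{Z}^{m\times n}$ with pairwise distinct columns has $\Delta_m(A)=\Delta$. For $t \in \mathbb{R}^m$ and $A\in\mathbb{R}^{m\times n}$ with columns $A_1,\dots,A_n$, $t+A$ denotes the matrix with columns $t+A_1,\dots,t+A_n$. The shifted Heller constant $h_s(m)$ is the maximum $n$ such that there exist $t \in [0,1)^m\setminus\{\mathbf 0\}$ and $A \in \{-1,0,1\}^{m\times n}$ with pairwise distinct columns such that $t+A$ is totally $1$-submodular. For an integer $\delta \ge 2$, the refined shifted Heller constant $h_s^{\delta}(m)$ is defined in the same way but with $t$ restricted to $[0,1)^m \cap (\tfrac{1}{\delta}\mathbb{Z})^m \setminus\{\mathbf 0\}$. (When $\Delta = 1$ the second summand has coefficient $\Delta-1=0$ and is interpreted as $0$.) *)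

theory Defs
  imports "Jordan_Normal_Form.Determinant" "Jordan_Normal_Form.DL_Submatrix"
          "HOL-Library.Extended_Nat"
begin

text \<open>Delta_k(A): maximum absolute value of a k x k minor of A
  (meaningful for 1 <= k <= min(dim_row A, dim_col A)).\<close>
definition Delta_k :: "nat \<Rightarrow> 'a::{comm_ring_1, linordered_idom} mat \<Rightarrow> 'a" where
  "Delta_k k A = Max {\<bar>det (submatrix A I J)\<bar> | I J.
      I \<subseteq> {..<dim_row A} \<and> J \<subseteq> {..<dim_col A} \<and> card I = k \<and> card J = k}"

definition totally_1_submodular :: "real mat \<Rightarrow> bool" where
  "totally_1_submodular B \<longleftrightarrow>
     (\<forall>I J. I \<subseteq> {..<dim_row B} \<longrightarrow> J \<subseteq> {..<dim_col B} \<longrightarrow> card I = card J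
        \<longrightarrow> \<bar>det (submatrix B I J)\<bar> \<le> 1)"

definition shift_mat :: "real vec \<Rightarrow> real mat \<Rightarrow> real mat" where
  "shift_mat t A = mat (dim_row A) (dim_col A) (\<lambda>(i,j). t $ i + A $$ (i,j))"

definition heller :: "nat \<Rightarrow> nat \<Rightarrow> enat" where
  "heller \<Delta> m = Sup {enat n | n. \<exists>A :: int mat. A \<in> carrier_mat m n \<and> m \<le> n \<and>
       distinct (cols A) \<and> Delta_k m A = int \<Delta>}"

definition shifted_admissible :: "(real vec \<Rightarrow> bool) \<Rightarrow> nat \<Rightarrow> nat \<Rightarrow> bool" where
  "shifted_admissible T m n \<longleftrightarrow>
     (\<exists>t A. t \<in> carrier_vec m \<and> (\<forall>i<m. 0 \<le> t $ i \<and> t $ i < 1) \<and> t \<noteq> 0\<^sub>v m \<and> T t \<and>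
        A \<in> carrier_mat m n \<and> (\<forall>i<m. \<forall>j<n. A $$ (i,j) \<in> {-1, 0, 1}) \<and>
        distinct (cols A) \<and> totally_1_submodular (shift_mat t A))"

definition shifted_heller :: "nat \<Rightarrow> enat" where
  "shifted_heller m = Sup {enat n | n. shifted_admissible (\<lambda>_. True) m n}"

definition refined_shifted_heller :: "nat \<Rightarrow> nat \<Rightarrow> enat" where
  "refined_shifted_heller \<delta> m = Sup {enat n | n. shifted_admissible
      (\<lambda>t. \<forall>i<dim_vec t. \<exists>k::int. t $ i = of_int k / of_nat \<delta>) m n}"

end

theory Submission
  imports Defs
begin


lemma sum_insert_index:
  fixes f :: "nat \<Rightarrow> 'a::comm_monoid_add"
  assumes "j < Suc m"
  shows "(\<Sum>l<Suc m. f l) = f j + (\<Sum>l<m. f (insert_index j l))"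
proof -
  have "(\<Sum>l<Suc m. f l) = f j + sum f ({..<Suc m} - {j})"
    by (rule sum.remove) (use assms in auto)
  also have "{..<Suc m} - {j} = insert_index j ` {..<m}"
  proof
    show "insert_index j ` {..<m} \<subseteq> {..<Suc m} - {j}" by (auto simp: insert_index_def)
    show "{..<Suc m} - {j} \<subseteq> insert_index j ` {..<m}"
    proof
      fix x assume x: "x \<in> {..<Suc m} - {j}"
      then have "x = insert_index j (delete_index j x)" by (simp add: insert_delete_index)
      moreover have "delete_index j x < m" using x assms unfolding delete_index_def by auto
      ultimately show "x \<in> insert_index j ` {..<m}" by blast
    qed
  qed
  also have "sum f (insert_index j ` {..<m}) = (\<Sum>l<m. f (insert_index j l))"
    by (rule sum.reindex_cong[where l = "insert_index j"], auto simp: inj_on_def insert_index_def split: if_splits)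
  finally show ?thesis .
qed

lemma det_single_row:
  fixes B :: "'a::comm_ring_1 mat"
  assumes B: "B \<in> carrier_mat (Suc m) (Suc m)" and j0: "j0 < Suc m"
    and z: "\<And>l. l < Suc m \<Longrightarrow> l \<noteq> j0 \<Longrightarrow> B $$ (0,l) = 0"
  shows "det B = (-1)^j0 * B $$ (0,j0) * det (mat_delete B 0 j0)"
proof -
  have "det B = (\<Sum>j<Suc m. B $$ (0,j) * cofactor B 0 j)"
    by (rule laplace_expansion_row[OF B], simp)
  also have "\<dots> = B $$ (0,j0) * cofactor B 0 j0 + (\<Sum>j\<in>{..<Suc m} - {j0}. B $$ (0,j) * cofactor B 0 j)"
    by (rule sum.remove) (use j0 in auto)
  also have "(\<Sum>j\<in>{..<Suc m} - {j0}. B $$ (0,j) * cofactor B 0 j) = 0"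
    by (rule sum.neutral) (use z in auto)
  finally show ?thesis unfolding cofactor_def by simp
qed


definition reps :: "int mat \<Rightarrow> int vec set \<Rightarrow> nat \<Rightarrow> bool" where
  "reps B R m \<longleftrightarrow> R \<subseteq> carrier_vec m \<and> finite R \<and> card R \<le> nat \<bar>det B\<bar> \<and>
     (\<forall>a\<in>carrier_vec m. \<exists>r\<in>R. \<exists>z\<in>carrier_vec m. a = r + B *\<^sub>v z)"

lemma reps_addcol:
  assumes B: "B \<in> carrier_mat n n" and j: "j < n" and k: "k < n" and jk: "j \<noteq> k"
    and R: "reps (addcol c k j B) R n"
  shows "reps B R n"
proof -
  let ?U = "addrow_mat n c j k"
  have eq: "addcol c k j B = B * ?U" by (rule addcol_mat[OF B j])
  have d: "det (addcol c k j B) = det B" using det_addcol[OF j jk[symmetric] B] .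
  have U: "?U \<in> carrier_mat n n" by (rule addrow_mat_carrier)
  show ?thesis unfolding reps_def
  proof (intro conjI ballI)
    show "R \<subseteq> carrier_vec n" "finite R" "card R \<le> nat \<bar>det B\<bar>" using R d unfolding reps_def by auto
    fix a :: "int vec" assume a: "a \<in> carrier_vec n"
    then obtain r z where r: "r \<in> R" and z: "z \<in> carrier_vec n" and az: "a = r + addcol c k j B *\<^sub>v z"
      using R unfolding reps_def by blast
    have e: "addcol c k j B *\<^sub>v z = B *\<^sub>v (?U *\<^sub>v z)" unfolding eq
      using assoc_mult_mat_vec[OF B U z] .
    have c: "?U *\<^sub>v z \<in> carrier_vec n" by (rule mult_mat_vec_carrier[OF U z])
    have "a = r + B *\<^sub>v (?U *\<^sub>v z)" using az e by simp
    then show "\<exists>r\<in>R. \<exists>z\<in>carrier_vec n. a = r + B *\<^sub>v z" using r c by blast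
  qed
qed

lemma reps_exists:
  fixes B :: "int mat"
  assumes "B \<in> carrier_mat m m" "det B \<noteq> 0"
  shows "\<exists>R. reps B R m"
  using assms
proof (induction m arbitrary: B)
  case 0
  have d: "det B = 1" using 0 by simp
  show ?case unfolding reps_def
  proof (intro exI[of _ "{0\<^sub>v 0}"] conjI ballI)
    show "{0\<^sub>v 0} \<subseteq> carrier_vec 0" by auto
    show "finite {0\<^sub>v 0::int vec}" by simp
    show "card {0\<^sub>v 0::int vec} \<le> nat \<bar>det B\<bar>" using d by simp
    fix a :: "int vec" assume a: "a \<in> carrier_vec 0"
    have "a = 0\<^sub>v 0 + B *\<^sub>v 0\<^sub>v 0" using a 0(1) by (intro eq_vecI) auto
    moreover have "0\<^sub>v 0 \<in> carrier_vec 0" by simp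
    ultimately show "\<exists>r\<in>{0\<^sub>v 0}. \<exists>z\<in>carrier_vec 0. a = r + B *\<^sub>v z" by blast
  qed
next
  case (Suc m)
  define \<mu> where "\<mu> = (\<lambda>B::int mat. \<Sum>j<Suc m. nat \<bar>B $$ (0,j)\<bar>)"
  have main: "B \<in> carrier_mat (Suc m) (Suc m) \<Longrightarrow> det B \<noteq> 0 \<Longrightarrow> \<mu> B = k \<Longrightarrow> \<exists>R. reps B R (Suc m)" for k B
  proof (induction k arbitrary: B rule: less_induct)
    case (less k B)
    note B = less.prems(1) and dB = less.prems(2)
    show ?case
    proof (cases "\<exists>j l. j < Suc m \<and> l < Suc m \<and> j \<noteq> l \<and> B $$ (0,j) \<noteq> 0 \<and> B $$ (0,l) \<noteq> 0 \<and> \<bar>B $$ (0,j)\<bar> \<le> \<bar>B $$ (0,l)\<bar>")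
      case True
      then obtain j l where j: "j < Suc m" and l: "l < Suc m" and jl: "j \<noteq> l" and bj: "B $$ (0,j) \<noteq> 0"
        and bl: "B $$ (0,l) \<noteq> 0" and le: "\<bar>B $$ (0,j)\<bar> \<le> \<bar>B $$ (0,l)\<bar>" by blast
      define c where "c = - (B $$ (0,l) div B $$ (0,j))"
      define B' where "B' = addcol c l j B"
      have B': "B' \<in> carrier_mat (Suc m) (Suc m)" using B unfolding B'_def by auto
      have dB': "det B' = det B" unfolding B'_def by (rule det_addcol[OF j jl[symmetric] B])
      have e: "B' $$ (0,i) = (if i = l then B $$ (0,l) mod B $$ (0,j) else B $$ (0,i))" if "i < Suc m" for i
      proof -
        have "c * B $$ (0, j) + B $$ (0, l) = B $$ (0,l) mod B $$ (0,j)"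
          unfolding c_def by (simp add: minus_div_mult_eq_mod[symmetric])
        then show ?thesis using that B unfolding B'_def by auto
      qed
      have "\<mu> B' < \<mu> B" unfolding \<mu>_def
      proof (rule sum_strict_mono_ex1)
        show "\<forall>x\<in>{..<Suc m}. nat \<bar>B' $$ (0, x)\<bar> \<le> nat \<bar>B $$ (0, x)\<bar>"
        proof
          fix x assume x: "x \<in> {..<Suc m}"
          show "nat \<bar>B' $$ (0, x)\<bar> \<le> nat \<bar>B $$ (0, x)\<bar>"
          proof (cases "x = l")
            case True
            have "\<bar>B $$ (0,l) mod B $$ (0,j)\<bar> < \<bar>B $$ (0,j)\<bar>" by (rule abs_mod_less[OF bj])
            then show ?thesis using e[of x] x True le by auto
          qed (use e[of x] x in auto)
        qed
        have "\<bar>B $$ (0,l) mod B $$ (0,j)\<bar> < \<bar>B $$ (0,j)\<bar>" by (rule abs_mod_less[OF bj])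
        then have "nat \<bar>B' $$ (0, l)\<bar> < nat \<bar>B $$ (0, l)\<bar>" using e[of l] l le by auto
        then show "\<exists>a\<in>{..<Suc m}. nat \<bar>B' $$ (0, a)\<bar> < nat \<bar>B $$ (0, a)\<bar>" using l by blast
      qed simp
      then have "\<mu> B' < k" using less.prems(3) by simp
      then obtain R where R: "reps B' R (Suc m)" using less.IH[OF _ B' _ refl] dB' dB by metis
      show ?thesis using reps_addcol[OF B j l jl R[unfolded B'_def]] by blast
    next
      case False
      have "\<exists>j0 < Suc m. B $$ (0,j0) \<noteq> 0"
      proof (rule ccontr)
        assume nz: "\<not> (\<exists>j0 < Suc m. B $$ (0,j0) \<noteq> 0)"
        then have "det B = (-1)^0 * B $$ (0,0) * det (mat_delete B 0 0)"
          by (intro det_single_row[OF B]) auto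
        then show False using dB nz by auto
      qed
      then obtain j0 where j0: "j0 < Suc m" and b0: "B $$ (0,j0) \<noteq> 0" by blast
      have zero: "B $$ (0,l) = 0" if "l < Suc m" "l \<noteq> j0" for l
      proof (rule ccontr)
        assume "B $$ (0,l) \<noteq> 0"
        then show False using False that j0 b0
          by (cases "\<bar>B $$ (0,j0)\<bar> \<le> \<bar>B $$ (0,l)\<bar>") (metis, metis linorder_le_cases)
      qed
      define b where "b = B $$ (0,j0)"
      define E where "E = mat_delete B 0 j0"
      have E: "E \<in> carrier_mat m m" unfolding E_def using mat_delete_carrier[OF B] by simp
      have detB: "det B = (-1)^j0 * b * det E" unfolding b_def E_def by (rule det_single_row[OF B j0 zero])
      have dE: "det E \<noteq> 0" using detB dB by auto
      obtain RE where RE: "reps E RE m" using Suc.IH[OF E dE] by blast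
      define emb where "emb = (\<lambda>(c::int, r::int vec). vec (Suc m) (\<lambda>i. if i = 0 then c else r $ (i - 1)))"
      define R where "R = emb ` ({0..<\<bar>b\<bar>} \<times> RE)"
      have absB: "nat \<bar>det B\<bar> = nat \<bar>b\<bar> * nat \<bar>det E\<bar>"
        unfolding detB by (simp add: abs_mult nat_mult_distrib)
      show ?thesis
      proof (intro exI[of _ R], unfold reps_def, intro conjI ballI)
        show "R \<subseteq> carrier_vec (Suc m)" unfolding R_def emb_def by auto
        show "finite R" unfolding R_def using RE unfolding reps_def by auto
        have "card R \<le> card ({0..<\<bar>b\<bar>} \<times> RE)" unfolding R_def by (rule card_image_le) (use RE in \<open>auto simp: reps_def\<close>)
        also have "\<dots> = nat \<bar>b\<bar> * card RE" by (simp add: card_cartesian_product)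
        also have "\<dots> \<le> nat \<bar>b\<bar> * nat \<bar>det E\<bar>" using RE unfolding reps_def by simp
        finally show "card R \<le> nat \<bar>det B\<bar>" unfolding absB .
        fix a :: "int vec" assume a: "a \<in> carrier_vec (Suc m)"
        define cc where "cc = a $ 0 mod \<bar>b\<bar>"
        define y0 where "y0 = sgn b * (a $ 0 div \<bar>b\<bar>)"
        have bsgn: "b * sgn b = \<bar>b\<bar>" by (cases "b > 0") (auto simp: sgn_if)
        have ay: "a $ 0 = cc + b * y0" unfolding cc_def y0_def
          by (metis bsgn div_mult_mod_eq mult.assoc mult.commute add.commute)
        have cc: "cc \<in> {0..<\<bar>b\<bar>}" unfolding cc_def using b0 b_def by simp
        define a' where "a' = vec m (\<lambda>i. a $ Suc i - B $$ (Suc i, j0) * y0)"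
        have a': "a' \<in> carrier_vec m" unfolding a'_def by simp
        obtain r' z' where r': "r' \<in> RE" and z': "z' \<in> carrier_vec m" and az': "a' = r' + E *\<^sub>v z'"
          using RE a' unfolding reps_def by blast
        have r'c: "r' \<in> carrier_vec m" using RE r' unfolding reps_def by auto
        define z where "z = vec (Suc m) (\<lambda>l. if l = j0 then y0 else z' $ delete_index j0 l)"
        have zc: "z \<in> carrier_vec (Suc m)" unfolding z_def by simp
        have Bz: "(B *\<^sub>v z) $ i = B $$ (i, j0) * y0 + (\<Sum>l<m. B $$ (i, insert_index j0 l) * z' $ l)"
          if i: "i < Suc m" for i
        proof -
          have "(B *\<^sub>v z) $ i = (\<Sum>l<Suc m. B $$ (i,l) * z $ l)"
            using B i zc by (simp add: scalar_prod_def lessThan_atLeast0)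
          also have "\<dots> = B $$ (i, j0) * z $ j0 + (\<Sum>l<m. B $$ (i, insert_index j0 l) * z $ (insert_index j0 l))"
            by (rule sum_insert_index[OF j0])
          also have "(\<Sum>l<m. B $$ (i, insert_index j0 l) * z $ (insert_index j0 l)) = (\<Sum>l<m. B $$ (i, insert_index j0 l) * z' $ l)"
          proof (rule sum.cong[OF refl])
            fix l assume l: "l \<in> {..<m}"
            have "insert_index j0 l < Suc m" "insert_index j0 l \<noteq> j0" using l unfolding insert_index_def by auto
            then show "B $$ (i, insert_index j0 l) * z $ (insert_index j0 l) = B $$ (i, insert_index j0 l) * z' $ l"
              unfolding z_def by simp
          qed
          finally show ?thesis using j0 unfolding z_def by simp
        qed
        have "a = emb (cc, r') + B *\<^sub>v z"
        proof (rule eq_vecI)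
          show "dim_vec a = dim_vec (emb (cc, r') + B *\<^sub>v z)" using a B unfolding emb_def by simp
          fix i assume "i < dim_vec (emb (cc, r') + B *\<^sub>v z)"
          then have i: "i < Suc m" using B unfolding emb_def by simp
          show "a $ i = (emb (cc, r') + B *\<^sub>v z) $ i"
          proof (cases i)
            case 0
            have "(\<Sum>l<m. B $$ (0, insert_index j0 l) * z' $ l) = 0"
            proof (rule sum.neutral, intro ballI)
              fix l assume l: "l \<in> {..<m}"
              have "insert_index j0 l < Suc m" "insert_index j0 l \<noteq> j0" using l unfolding insert_index_def by auto
              then show "B $$ (0, insert_index j0 l) * z' $ l = 0" using zero by simp
            qed
            then have "(B *\<^sub>v z) $ 0 = b * y0" using Bz[of 0] unfolding b_def by (simp add: mult.commute)
            then show ?thesis using 0 ay B unfolding emb_def by simp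
          next
            case (Suc i')
            have i': "i' < m" using i Suc by simp
            have "(E *\<^sub>v z') $ i' = (\<Sum>l<m. E $$ (i',l) * z' $ l)"
              using E i' z' by (simp add: scalar_prod_def lessThan_atLeast0)
            also have "\<dots> = (\<Sum>l<m. B $$ (i, insert_index j0 l) * z' $ l)"
              using B i' Suc unfolding E_def mat_delete_def insert_index_def by simp
            finally have Ez: "(E *\<^sub>v z') $ i' = (\<Sum>l<m. B $$ (i, insert_index j0 l) * z' $ l)" .
            have "a' $ i' = r' $ i' + (E *\<^sub>v z') $ i'" using az' r'c z' E i' by simp
            then have "a $ i = r' $ i' + B $$ (i, j0) * y0 + (\<Sum>l<m. B $$ (i, insert_index j0 l) * z' $ l)"
              unfolding Ez a'_def using i' Suc by simp
            then show ?thesis using Bz[OF i] Suc B i unfolding emb_def by simp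
          qed
        qed
        moreover have "emb (cc, r') \<in> R" unfolding R_def using cc r' by blast
        ultimately show "\<exists>r\<in>R. \<exists>z\<in>carrier_vec (Suc m). a = r + B *\<^sub>v z" using zc by blast
      qed
    qed
  qed
  show ?case using main[OF Suc.prems refl] .
qed



lemma pick_eqI: "x \<in> S \<Longrightarrow> card {a\<in>S. a < x} = i \<Longrightarrow> pick S i = x"
  using pick_card_in_set by blast

lemma sub_rows_eq: "I \<subseteq> {..<n} \<Longrightarrow> {i. i < n \<and> i \<in> I} = I" by auto

lemma dim_submatrix':
  assumes "I \<subseteq> {..<dim_row M}" "K \<subseteq> {..<dim_col M}"
  shows "dim_row (submatrix M I K) = card I" "dim_col (submatrix M I K) = card K"
  using assms unfolding dim_submatrix by (simp_all add: sub_rows_eq)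

lemma submatrix_carrier':
  assumes "M \<in> carrier_mat m N" "I \<subseteq> {..<m}" "K \<subseteq> {..<N}"
  shows "submatrix M I K \<in> carrier_mat (card I) (card K)"
  using dim_submatrix'[of I M K] assms by auto

lemma pick_mono_iff:
  assumes "b < card S" "b' < card S"
  shows "pick S b < pick S b' \<longleftrightarrow> b < b'"
  using assms pick_mono_le[of b' S b] pick_mono_le[of b S b'] by (metis not_less_iff_gr_or_eq)

lemma pick_inj: "inj_on (pick S) {..<card S}"
  unfolding inj_on_def by (metis lessThan_iff nat_neq_iff pick_mono_le)

lemma pick_insert:
  assumes fin: "finite I" and r: "r \<notin> I" and i: "i < card I"
  shows "pick (insert r I) (if i < card {a\<in>I. a < r} then i else Suc i) = pick I i"
proof -
  define x where "x = pick I i"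
  define q where "q = card {a\<in>I. a < r}"
  have xI: "x \<in> I" unfolding x_def by (rule pick_in_set_le[OF i])
  have cx: "card {a\<in>I. a < x} = i" unfolding x_def by (rule card_pick_le[OF i])
  have xr: "x \<noteq> r" using xI r by auto
  show ?thesis
  proof (cases "r < x")
    case True
    have "{a\<in>insert r I. a < x} = insert r {a\<in>I. a < x}" using True by auto
    then have c1: "card {a\<in>insert r I. a < x} = Suc i" using cx r fin by simp
    have "q \<le> i" unfolding q_def cx[symmetric] by (rule card_mono) (use fin True in auto)
    then show ?thesis using c1 xI unfolding q_def[symmetric] x_def[symmetric]
      by (intro pick_eqI) auto
  next
    case False
    then have xr': "x < r" using xr by auto
    have "{a\<in>insert r I. a < x} = {a\<in>I. a < x}" using xr' by auto
    then have c1: "card {a\<in>insert r I. a < x} = i" using cx by simp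
    have "{a\<in>I. a < x} \<subset> {a\<in>I. a < r}" using xr' xI by auto
    then have "i < q" unfolding q_def cx[symmetric] by (rule psubset_card_mono[rotated]) (use fin in auto)
    then show ?thesis using c1 xI unfolding q_def[symmetric] x_def[symmetric]
      by (intro pick_eqI) auto
  qed
qed

lemma pick_image:
  assumes fin: "finite S" and K: "K \<subseteq> {..<card S}" and k: "k < card K"
  shows "pick (pick S ` K) k = pick S (pick K k)"
proof (rule pick_eqI)
  have pK: "pick K k \<in> K" by (rule pick_in_set_le[OF k])
  then show "pick S (pick K k) \<in> pick S ` K" by blast
  have "{a \<in> pick S ` K. a < pick S (pick K k)} = pick S ` {b\<in>K. b < pick K k}"
  proof
    show "{a \<in> pick S ` K. a < pick S (pick K k)} \<subseteq> pick S ` {b \<in> K. b < pick K k}"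
      using pick_mono_iff[of _ S "pick K k"] K pK by auto
    show "pick S ` {b \<in> K. b < pick K k} \<subseteq> {a \<in> pick S ` K. a < pick S (pick K k)}"
      using pick_mono_iff[of _ S "pick K k"] K pK by auto
  qed
  also have "card \<dots> = card {b\<in>K. b < pick K k}"
    by (rule card_image, rule inj_on_subset[OF pick_inj]) (use K in auto)
  also have "\<dots> = k" by (rule card_pick_le[OF k])
  finally show "card {a \<in> pick S ` K. a < pick S (pick K k)} = k" .
qed

lemma card_pick_image:
  assumes "K \<subseteq> {..<card S}"
  shows "card (pick S ` K) = card K"
  by (rule card_image, rule inj_on_subset[OF pick_inj assms])

lemma pick_image_subset:
  assumes "K \<subseteq> {..<card S}"
  shows "pick S ` K \<subseteq> S"
  using assms pick_in_set_le by auto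

lemma submatrix_compose:
  fixes M :: "'a mat"
  assumes M: "M \<in> carrier_mat r N" and S: "S \<subseteq> {..<N}"
    and I: "I \<subseteq> {..<r}" and K: "K \<subseteq> {..<card S}"
  shows "submatrix (mat r (card S) (\<lambda>(i,k). M $$ (i, pick S k))) I K = submatrix M I (pick S ` K)"
proof -
  have finS: "finite S" using S finite_subset by blast
  have pS: "pick S ` K \<subseteq> {..<N}" using pick_image_subset[OF K] S by auto
  let ?X = "mat r (card S) (\<lambda>(i,k). M $$ (i, pick S k))"
  have d1: "dim_row (submatrix ?X I K) = card I" "dim_col (submatrix ?X I K) = card K"
    using dim_submatrix'[of I ?X K] I K by auto
  have d2: "dim_row (submatrix M I (pick S ` K)) = card I" "dim_col (submatrix M I (pick S ` K)) = card K"
    using dim_submatrix'[of I M "pick S ` K"] I pS M card_pick_image[OF K] by auto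
  show ?thesis
  proof (rule eq_matI)
    fix i k assume i: "i < dim_row (submatrix M I (pick S ` K))" and k: "k < dim_col (submatrix M I (pick S ` K))"
    have iI: "i < card I" and kK: "k < card K" using i k d2 by auto
    have fI: "finite I" using I finite_subset by blast
    have "pick I i \<in> I" by (rule pick_in_set_le[OF iI])
    then have pi: "pick I i < r" using I by auto
    have "pick K k \<in> K" by (rule pick_in_set_le[OF kK])
    then have pk: "pick K k < card S" using K by auto
    have e1: "submatrix ?X I K $$ (i,k) = ?X $$ (pick I i, pick K k)"
      by (rule submatrix_index) (use iI kK I K in \<open>simp_all add: sub_rows_eq\<close>)
    have e2: "submatrix M I (pick S ` K) $$ (i,k) = M $$ (pick I i, pick (pick S ` K) k)"
      by (rule submatrix_index) (use iI kK I pS M card_pick_image[OF K] in \<open>simp_all add: sub_rows_eq\<close>)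
    show "submatrix ?X I K $$ (i,k) = submatrix M I (pick S ` K) $$ (i,k)"
      unfolding e1 e2 pick_image[OF finS K kK] using pi pk by simp
  qed (use d1 d2 in auto)
qed


lemma det_zero_col:
  fixes S :: "'a::comm_ring_1 mat"
  assumes S: "S \<in> carrier_mat s s" and p: "p < s" and z: "\<And>i. i < s \<Longrightarrow> S $$ (i,p) = 0"
  shows "det S = 0"
  using laplace_expansion_column[OF S p] z by simp

lemma det_unit_col:
  fixes S :: "'a::comm_ring_1 mat"
  assumes S: "S \<in> carrier_mat (Suc s) (Suc s)" and p: "p < Suc s" and q: "q < Suc s"
    and z: "\<And>i. i < Suc s \<Longrightarrow> S $$ (i,p) = (if i = q then 1 else 0)"
  shows "det S = (-1)^(q+p) * det (mat_delete S q p)"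
proof -
  have "det S = (\<Sum>i<Suc s. S $$ (i,p) * cofactor S i p)" by (rule laplace_expansion_column[OF S p])
  also have "\<dots> = S $$ (q,p) * cofactor S q p + (\<Sum>i\<in>{..<Suc s} - {q}. S $$ (i,p) * cofactor S i p)"
    by (rule sum.remove) (use q in auto)
  also have "(\<Sum>i\<in>{..<Suc s} - {q}. S $$ (i,p) * cofactor S i p) = 0"
    by (rule sum.neutral) (use z in auto)
  finally show ?thesis unfolding cofactor_def using z[OF q] by simp
qed

lemma minors_le1:
  fixes M :: "real mat"
  assumes M: "M \<in> carrier_mat m N"
    and c: "\<And>i. i < m \<Longrightarrow> c i < N" "inj_on c {..<m}"
    and unit: "\<And>i r. i < m \<Longrightarrow> r < m \<Longrightarrow> M $$ (r, c i) = (if r = i then 1 else 0)"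
    and full: "\<And>K. K \<subseteq> {..<N} \<Longrightarrow> card K = m \<Longrightarrow> \<bar>det (submatrix M {..<m} K)\<bar> \<le> 1"
  shows "I \<subseteq> {..<m} \<Longrightarrow> K \<subseteq> {..<N} \<Longrightarrow> card I = card K \<Longrightarrow> \<bar>det (submatrix M I K)\<bar> \<le> 1"
proof (induction "m - card I" arbitrary: I K rule: less_induct)
  case less
  note I = less.prems(1) and K = less.prems(2) and cIK = less.prems(3)
  have fI: "finite I" using I finite_subset by blast
  have fK: "finite K" using K finite_subset by blast
  have cI: "card I \<le> m" using card_mono[OF _ I] by simp
  show ?case
  proof (cases "card I = m")
    case True
    then have "I = {..<m}" using I by (intro card_subset_eq) auto
    then show ?thesis using full[OF K] True cIK by simp
  next
    case False
    then have cIm: "card I < m" using cI by simp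
    from False have "I \<noteq> {..<m}" by auto
    then obtain r where r: "r < m" "r \<notin> I" using I by auto
    define s where "s = card I"
    have S: "submatrix M I K \<in> carrier_mat s s" unfolding s_def using submatrix_carrier'[OF M I K] cIK by simp
    show ?thesis
    proof (cases "c r \<in> K")
      case True
      define p where "p = card {a\<in>K. a < c r}"
      have "{a\<in>K. a < c r} \<subset> K" using True by auto
      then have p: "p < s" unfolding p_def s_def cIK by (rule psubset_card_mono[OF fK])
      have "det (submatrix M I K) = 0"
      proof (rule det_zero_col[OF S p])
        fix i assume i: "i < s"
        have iI: "i < card I" using i s_def by simp
        have pi: "pick I i \<in> I" by (rule pick_in_set_le[OF iI])
        have pk: "pick K p = c r" unfolding p_def by (rule pick_eqI[OF True refl])
        have "submatrix M I K $$ (i,p) = M $$ (pick I i, pick K p)"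
          by (rule submatrix_index) (use iI p I K M cIK s_def in \<open>simp_all add: sub_rows_eq\<close>)
        also have "\<dots> = 0" unfolding pk using unit[OF r(1), of "pick I i"] pi I r by auto
        finally show "submatrix M I K $$ (i,p) = 0" .
      qed
      then show ?thesis by simp
    next
      case False
      define I' where "I' = insert r I"
      define K' where "K' = insert (c r) K"
      have I': "I' \<subseteq> {..<m}" unfolding I'_def using I r by auto
      have K': "K' \<subseteq> {..<N}" unfolding K'_def using K c(1)[OF r(1)] by auto
      have cI': "card I' = Suc s" unfolding I'_def s_def using fI r by simp
      have cK': "card K' = Suc s" unfolding K'_def s_def cIK using fK False by simp
      have IH: "\<bar>det (submatrix M I' K')\<bar> \<le> 1"
        by (rule less.hyps[OF _ I' K']) (use cI' cK' cIm s_def in auto)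
      define q where "q = card {a\<in>I. a < r}"
      define p where "p = card {a\<in>K. a < c r}"
      have q: "q < Suc s" unfolding q_def s_def using card_mono[OF fI, of "{a\<in>I. a < r}"] by auto
      have p: "p < Suc s" unfolding p_def s_def cIK using card_mono[OF fK, of "{a\<in>K. a < c r}"] by auto
      have S': "submatrix M I' K' \<in> carrier_mat (Suc s) (Suc s)"
        using submatrix_carrier'[OF M I' K'] cI' cK' by simp
      have "{a\<in>insert r I. a < r} = {a\<in>I. a < r}" by auto
      then have pq: "pick I' q = r" unfolding q_def I'_def
        by (intro pick_eqI) auto
      have "{a\<in>insert (c r) K. a < c r} = {a\<in>K. a < c r}" by auto
      then have pp: "pick K' p = c r" unfolding p_def K'_def
        by (intro pick_eqI) auto
      have "det (submatrix M I' K') = (-1)^(q+p) * det (mat_delete (submatrix M I' K') q p)"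
      proof (rule det_unit_col[OF S' p q])
        fix i assume i: "i < Suc s"
        have pi: "pick I' i \<in> I'" by (rule pick_in_set_le) (use i cI' in simp)
        have "submatrix M I' K' $$ (i,p) = M $$ (pick I' i, pick K' p)"
          by (rule submatrix_index) (use i p I' K' M cI' cK' in \<open>simp_all add: sub_rows_eq\<close>)
        also have "\<dots> = (if pick I' i = r then 1 else 0)" unfolding pp using unit[OF r(1), of "pick I' i"] pi I' by auto
        also have "\<dots> = (if i = q then 1 else 0)"
        proof -
          have "pick I' i = pick I' q \<longleftrightarrow> i = q" using pick_inj[of I'] i q cI' unfolding inj_on_def by auto
          then show ?thesis using pq by simp
        qed
        finally show "submatrix M I' K' $$ (i,p) = (if i = q then 1 else 0)" .
      qed
      also have "mat_delete (submatrix M I' K') q p = submatrix M I K"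
      proof (rule eq_matI)
        show "dim_row (mat_delete (submatrix M I' K') q p) = dim_row (submatrix M I K)"
          "dim_col (mat_delete (submatrix M I' K') q p) = dim_col (submatrix M I K)" using S S' by auto
        fix i k assume i: "i < dim_row (submatrix M I K)" and k: "k < dim_col (submatrix M I K)"
        have i': "i < s" and k': "k < s" using i k S by auto
        have "mat_delete (submatrix M I' K') q p $$ (i,k) =
              submatrix M I' K' $$ (if i < q then i else Suc i, if k < p then k else Suc k)"
          unfolding mat_delete_def using i' k' S' by simp
        also have "\<dots> = M $$ (pick I' (if i < q then i else Suc i), pick K' (if k < p then k else Suc k))"
          by (rule submatrix_index) (use i' k' I' K' M cI' cK' in \<open>auto simp: sub_rows_eq\<close>)
        also have "pick I' (if i < q then i else Suc i) = pick I i"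
          unfolding I'_def q_def by (rule pick_insert[OF fI r(2)]) (use i' s_def in simp)
        also have "pick K' (if k < p then k else Suc k) = pick K k"
          unfolding K'_def p_def by (rule pick_insert[OF fK False]) (use k' s_def cIK in simp)
        also have "M $$ (pick I i, pick K k) = submatrix M I K $$ (i,k)"
          by (rule submatrix_index[symmetric]) (use i' k' I K M cIK s_def in \<open>simp_all add: sub_rows_eq\<close>)
        finally show "mat_delete (submatrix M I' K') q p $$ (i,k) = submatrix M I K $$ (i,k)" .
      qed
      finally have "\<bar>det (submatrix M I' K')\<bar> = \<bar>det (submatrix M I K)\<bar>" by (simp add: abs_mult)
      then show ?thesis using IH by simp
    qed
  qed
qed



lemma pick_lessThan: "i < m \<Longrightarrow> pick {..<m} i = i"
proof (rule pick_eqI)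
  assume "i < m"
  then have "{a \<in> {..<m}. a < i} = {..<i}" by auto
  then show "card {a \<in> {..<m}. a < i} = i" by simp
qed simp

lemma subm_rows_all:
  assumes M: "M \<in> carrier_mat m N" and K: "K \<subseteq> {..<N}"
  shows "submatrix M {..<m} K = mat m (card K) (\<lambda>(i,k). M $$ (i, pick K k))"
proof -
  have d: "dim_row (submatrix M {..<m} K) = m" "dim_col (submatrix M {..<m} K) = card K"
    using dim_submatrix'[of "{..<m}" M K] M K by auto
  show ?thesis
  proof (rule eq_matI)
    fix i k assume i: "i < dim_row (mat m (card K) (\<lambda>(i,k). M $$ (i, pick K k)))"
      and k: "k < dim_col (mat m (card K) (\<lambda>(i,k). M $$ (i, pick K k)))"
    have "submatrix M {..<m} K $$ (i,k) = M $$ (pick {..<m} i, pick K k)"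
      by (rule submatrix_index) (use i k M K in \<open>simp_all add: sub_rows_eq\<close>)
    then show "submatrix M {..<m} K $$ (i,k) = mat m (card K) (\<lambda>(i,k). M $$ (i, pick K k)) $$ (i,k)"
      using i k pick_lessThan[of i m] by simp
  qed (use d in auto)
qed

lemma distinct_cols_iff:
  assumes "X \<in> carrier_mat m N"
  shows "distinct (cols X) \<longleftrightarrow> (\<forall>j<N. \<forall>j'<N. j \<noteq> j' \<longrightarrow> (\<exists>i<m. X $$ (i,j) \<noteq> X $$ (i,j')))"
proof -
  have "distinct (cols X) \<longleftrightarrow> inj_on (col X) {..<N}"
    using assms unfolding cols_def by (simp add: distinct_map lessThan_atLeast0)
  also have "\<dots> \<longleftrightarrow> (\<forall>j<N. \<forall>j'<N. j \<noteq> j' \<longrightarrow> col X j \<noteq> col X j')"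
    unfolding inj_on_def by auto
  also have "\<dots> \<longleftrightarrow> (\<forall>j<N. \<forall>j'<N. j \<noteq> j' \<longrightarrow> (\<exists>i<m. X $$ (i,j) \<noteq> X $$ (i,j')))"
  proof -
    have "col X j \<noteq> col X j' \<longleftrightarrow> (\<exists>i<m. X $$ (i,j) \<noteq> X $$ (i,j'))" if "j < N" "j' < N" for j j'
    proof
      assume "col X j \<noteq> col X j'"
      then show "\<exists>i<m. X $$ (i,j) \<noteq> X $$ (i,j')" using assms that by (metis carrier_matD col_def eq_vecI dim_vec index_vec)
    next
      assume "\<exists>i<m. X $$ (i,j) \<noteq> X $$ (i,j')"
      then show "col X j \<noteq> col X j'" using assms that by (metis carrier_matD index_col)
    qed
    then show ?thesis by blast
  qed
  finally show ?thesis .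
qed



lemma main_setup:
  fixes A :: "int mat"
  assumes A: "A \<in> carrier_mat m n" and mn: "m \<le> n" and DA: "Delta_k m A = int \<Delta>"
  shows "\<exists>J. J \<subseteq> {..<n} \<and> card J = m \<and> \<bar>det (submatrix A {..<m} J)\<bar> = int \<Delta>"
    and "\<And>K. K \<subseteq> {..<n} \<Longrightarrow> card K = m \<Longrightarrow> \<bar>det (submatrix A {..<m} K)\<bar> \<le> int \<Delta>"
proof -
  define Sm where "Sm = {\<bar>det (submatrix A I J)\<bar> | I J.
      I \<subseteq> {..<dim_row A} \<and> J \<subseteq> {..<dim_col A} \<and> card I = m \<and> card J = m}"
  have DA': "Max Sm = int \<Delta>" using DA unfolding Delta_k_def Sm_def by simp
  have "Sm \<subseteq> (\<lambda>(I,J). \<bar>det (submatrix A I J)\<bar>) ` (Pow {..<m} \<times> Pow {..<n})"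
    unfolding Sm_def using A by auto
  then have fin: "finite Sm" by (rule finite_subset) auto
  have "\<exists>I J. \<bar>det (submatrix A {..<m} {..<m})\<bar> = \<bar>det (submatrix A I J)\<bar> \<and> I \<subseteq> {..<dim_row A} \<and> J \<subseteq> {..<dim_col A} \<and> card I = m \<and> card J = m"
    by (rule exI[of _ "{..<m}"], rule exI[of _ "{..<m}"]) (use mn A in auto)
  then have "\<bar>det (submatrix A {..<m} {..<m})\<bar> \<in> Sm" unfolding Sm_def by blast
  then have ne: "Sm \<noteq> {}" by auto
  have "Max Sm \<in> Sm" using fin ne by (rule Max_in)
  then have "int \<Delta> \<in> Sm" using DA' by simp
  then have "\<exists>I J. int \<Delta> = \<bar>det (submatrix A I J)\<bar> \<and> I \<subseteq> {..<dim_row A} \<and> J \<subseteq> {..<dim_col A} \<and> card I = m \<and> card J = m"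
    unfolding Sm_def by (rule CollectD)
  then obtain I J where IJ: "I \<subseteq> {..<m}" "J \<subseteq> {..<n}" "card I = m" "card J = m"
    and v: "\<bar>det (submatrix A I J)\<bar> = int \<Delta>" using A by auto
  have "I = {..<m}" using IJ by (intro card_subset_eq) auto
  then show "\<exists>J. J \<subseteq> {..<n} \<and> card J = m \<and> \<bar>det (submatrix A {..<m} J)\<bar> = int \<Delta>" using IJ v by blast
  fix K assume K: "K \<subseteq> {..<n}" "card K = m"
  have "\<exists>I J. \<bar>det (submatrix A {..<m} K)\<bar> = \<bar>det (submatrix A I J)\<bar> \<and> I \<subseteq> {..<dim_row A} \<and> J \<subseteq> {..<dim_col A} \<and> card I = m \<and> card J = m"
    by (rule exI[of _ "{..<m}"], rule exI[of _ K]) (use K A in auto)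
  then have "\<bar>det (submatrix A {..<m} K)\<bar> \<in> Sm" unfolding Sm_def by blast
  then show "\<bar>det (submatrix A {..<m} K)\<bar> \<le> int \<Delta>" using Max_ge[OF fin] DA' by fastforce
qed


definition fv :: "real mat \<Rightarrow> nat \<Rightarrow> real vec" where
  "fv C j = vec (dim_row C) (\<lambda>i. C $$ (i,j) - of_int \<lfloor>C $$ (i,j)\<rfloor>)"

lemma core:
  fixes A :: "int mat"
  assumes A: "A \<in> carrier_mat m n" and m0: "m > 0" and dist: "distinct (cols A)"
    and J: "J \<subseteq> {..<n}" "card J = m" and BJ: "\<bar>det (submatrix A {..<m} J)\<bar> = int \<Delta>"
    and bnd: "\<And>K. K \<subseteq> {..<n} \<Longrightarrow> card K = m \<Longrightarrow> \<bar>det (submatrix A {..<m} K)\<bar> \<le> int \<Delta>"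
    and \<Delta>0: "\<Delta> > 0"
  shows "\<exists>C :: real mat. C \<in> carrier_mat m n \<and>
   (\<forall>i<m. \<forall>r<m. C $$ (r, pick J i) = (if r = i then 1 else 0)) \<and>
   (\<forall>I K. I \<subseteq> {..<m} \<longrightarrow> K \<subseteq> {..<n} \<longrightarrow> card I = card K \<longrightarrow> \<bar>det (submatrix C I K)\<bar> \<le> 1) \<and>
   (\<forall>j<n. \<forall>j'<n. j \<noteq> j' \<longrightarrow> (\<exists>i<m. C $$ (i,j) \<noteq> C $$ (i,j'))) \<and>
   (\<forall>i<m. \<forall>j<n. \<exists>k::int. C $$ (i,j) = of_int k / of_nat \<Delta>) \<and>
   card (fv C ` {..<n}) \<le> \<Delta>"
proof -
  define B where "B = submatrix A {..<m} J"
  have Bc: "B \<in> carrier_mat m m" unfolding B_def using submatrix_carrier'[OF A subset_refl J(1)] J(2) by simp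
  have Bform: "B = mat m m (\<lambda>(i,k). A $$ (i, pick J k))" unfolding B_def using subm_rows_all[OF A J(1)] J(2) by simp
  define d where "d = det B"
  have absd: "\<bar>d\<bar> = int \<Delta>" unfolding d_def B_def using BJ .
  have d0: "d \<noteq> 0" using absd \<Delta>0 by auto
  define D where "D = adj_mat B"
  have Dc: "D \<in> carrier_mat m m" and BD: "B * D = d \<cdot>\<^sub>m 1\<^sub>m m" and DB: "D * B = d \<cdot>\<^sub>m 1\<^sub>m m"
    using adj_mat[OF Bc] unfolding D_def d_def by auto
  define G where "G = D * A"
  have Gc: "G \<in> carrier_mat m n" unfolding G_def using Dc A by simp
  have pJn: "pick J k < n" if "k < m" for k using pick_in_set_le[of k J] J that by auto
  have colB: "col B k = col A (pick J k)" if "k < m" for k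
    using that A J pJn[OF that] unfolding Bform by (intro eq_vecI) auto
  have G1: "G $$ (i, pick J k) = (if i = k then d else 0)" if "i < m" "k < m" for i k
  proof -
    have pJ: "pick J k < n" using pick_in_set_le[of k J] J that by auto
    have "G $$ (i, pick J k) = row D i \<bullet> col A (pick J k)" unfolding G_def using Dc A that pJ by simp
    also have "\<dots> = (D * B) $$ (i,k)" using Dc Bc that colB[of k] by simp
    also have "\<dots> = (if i = k then d else 0)" unfolding DB using that by simp
    finally show ?thesis .
  qed
  have detD: "det D * d = d ^ m"
  proof -
    have "det (D * B) = det D * det B" by (rule det_mult[OF Dc Bc])
    moreover have "det (D * B) = d ^ m" unfolding DB by simp
    ultimately show ?thesis unfolding d_def by simp
  qed
  have absD: "\<bar>det D\<bar> * \<bar>d\<bar> = \<bar>d\<bar> ^ m" using arg_cong[OF detD, of abs] by (simp add: abs_mult power_abs)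
  have GK: "\<bar>det (submatrix G {..<m} K)\<bar> \<le> \<bar>d\<bar> ^ m" if K: "K \<subseteq> {..<n}" "card K = m" for K
  proof -
    have AK: "submatrix A {..<m} K \<in> carrier_mat m m" using submatrix_carrier'[OF A subset_refl K(1)] K(2) by simp
    have "submatrix G {..<m} K = D * submatrix A {..<m} K"
    proof -
      have e1: "submatrix G {..<m} K = mat m (card K) (\<lambda>(i,k). G $$ (i, pick K k))" by (rule subm_rows_all[OF Gc K(1)])
      have e2: "submatrix A {..<m} K = mat m (card K) (\<lambda>(i,k). A $$ (i, pick K k))" by (rule subm_rows_all[OF A K(1)])
      show ?thesis unfolding e1
      proof (rule eq_matI)
        fix i k assume i: "i < dim_row (D * submatrix A {..<m} K)" and k: "k < dim_col (D * submatrix A {..<m} K)"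
        have i': "i < m" and k': "k < m" using i k Dc AK by auto
        have pK: "pick K k < n" using pick_in_set_le[of k K] K k' by auto
        have cA: "col (submatrix A {..<m} K) k = col A (pick K k)"
          using A k' K pK unfolding e2 by (intro eq_vecI) auto
        show "mat m (card K) (\<lambda>(i,k). G $$ (i, pick K k)) $$ (i,k) = (D * submatrix A {..<m} K) $$ (i,k)"
          using i' k' K Dc AK A pK cA unfolding G_def by simp
      qed (use Dc AK K in auto)
    qed
    then have "det (submatrix G {..<m} K) = det D * det (submatrix A {..<m} K)" using det_mult[OF Dc AK] by simp
    then have "\<bar>det (submatrix G {..<m} K)\<bar> = \<bar>det D\<bar> * \<bar>det (submatrix A {..<m} K)\<bar>" by (simp add: abs_mult)
    also have "\<dots> \<le> \<bar>det D\<bar> * \<bar>d\<bar>" using bnd[OF K] absd by (intro mult_left_mono) auto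
    finally show ?thesis using absD by simp
  qed
  define dr where "dr = real_of_int d"
  have dr0: "dr \<noteq> 0" using d0 unfolding dr_def by simp
  define C where "C = mat m n (\<lambda>(i,j). real_of_int (G $$ (i,j)) / dr)"
  have Cc: "C \<in> carrier_mat m n" unfolding C_def by simp
  have C1: "\<forall>i<m. \<forall>r<m. C $$ (r, pick J i) = (if r = i then 1 else 0)"
  proof (intro allI impI)
    fix i r assume "i < m" "r < m"
    moreover have "pick J i < n" using pick_in_set_le[of i J] J \<open>i < m\<close> by auto
    ultimately show "C $$ (r, pick J i) = (if r = i then 1 else 0)" unfolding C_def using G1 dr0 dr_def by simp
  qed
  have Cfull: "\<bar>det (submatrix C {..<m} K)\<bar> \<le> 1" if K: "K \<subseteq> {..<n}" "card K = m" for K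
  proof -
    have "submatrix C {..<m} K = (1 / dr) \<cdot>\<^sub>m map_mat real_of_int (submatrix G {..<m} K)"
      unfolding subm_rows_all[OF Cc K(1)] subm_rows_all[OF Gc K(1)]
    proof (rule eq_matI)
      fix i k assume "i < dim_row ((1 / dr) \<cdot>\<^sub>m map_mat real_of_int (mat m (card K) (\<lambda>(i, k). G $$ (i, pick K k))))"
        "k < dim_col ((1 / dr) \<cdot>\<^sub>m map_mat real_of_int (mat m (card K) (\<lambda>(i, k). G $$ (i, pick K k))))"
      then have ik: "i < m" "k < card K" by auto
      have pK: "pick K k < n" using pick_in_set_le[of k K] K ik by auto
      show "mat m (card K) (\<lambda>(i, k). C $$ (i, pick K k)) $$ (i, k) =
        ((1 / dr) \<cdot>\<^sub>m map_mat real_of_int (mat m (card K) (\<lambda>(i, k). G $$ (i, pick K k)))) $$ (i, k)"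
        using ik pK unfolding C_def by simp
    qed auto
    then have "det (submatrix C {..<m} K) = (1/dr)^m * real_of_int (det (submatrix G {..<m} K))"
      using submatrix_carrier'[OF Gc subset_refl K(1)] K(2) by (simp add: det_smult)
    then have "\<bar>det (submatrix C {..<m} K)\<bar> = real_of_int \<bar>det (submatrix G {..<m} K)\<bar> / \<bar>dr\<bar>^m"
      by (simp add: abs_mult power_abs power_one_over divide_inverse power_inverse)
    also have "\<dots> \<le> \<bar>dr\<bar>^m / \<bar>dr\<bar>^m"
    proof (rule divide_right_mono)
      have "real_of_int \<bar>det (submatrix G {..<m} K)\<bar> \<le> real_of_int (\<bar>d\<bar> ^ m)" using GK[OF K] by linarith
      then show "real_of_int \<bar>det (submatrix G {..<m} K)\<bar> \<le> \<bar>dr\<bar>^m" unfolding dr_def by simp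
    qed simp
    also have "\<dots> = 1" using dr0 by simp
    finally show ?thesis .
  qed
  have CM: "\<forall>I K. I \<subseteq> {..<m} \<longrightarrow> K \<subseteq> {..<n} \<longrightarrow> card I = card K \<longrightarrow> \<bar>det (submatrix C I K)\<bar> \<le> 1"
  proof (intro allI impI)
    fix I K assume IK: "I \<subseteq> {..<m}" "K \<subseteq> {..<n}" "card I = card K"
    show "\<bar>det (submatrix C I K)\<bar> \<le> 1"
    proof (rule minors_le1[OF Cc, of "pick J"])
      show "pick J i < n" if "i < m" for i using pick_in_set_le[of i J] J that by auto
      show "inj_on (pick J) {..<m}" using pick_inj[of J] J by simp
      show "C $$ (r, pick J i) = (if r = i then 1 else 0)" if "i < m" "r < m" for i r using C1 that by simp
      show "\<bar>det (submatrix C {..<m} K)\<bar> \<le> 1" if "K \<subseteq> {..<n}" "card K = m" for K using Cfull that by simp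
    qed (use IK in auto)
  qed
  have BG: "B * G = d \<cdot>\<^sub>m A"
  proof -
    have "B * G = (B * D) * A" unfolding G_def using assoc_mult_mat[OF Bc Dc A] by simp
    also have "\<dots> = d \<cdot>\<^sub>m A" unfolding BD mult_smult_assoc_mat[OF one_carrier_mat A] using A by simp
    finally show ?thesis .
  qed
  have Cdist: "\<forall>j<n. \<forall>j'<n. j \<noteq> j' \<longrightarrow> (\<exists>i<m. C $$ (i,j) \<noteq> C $$ (i,j'))"
  proof (intro allI impI)
    fix j j' assume jj: "j < n" "j' < n" "j \<noteq> j'"
    obtain i where i: "i < m" "A $$ (i,j) \<noteq> A $$ (i,j')" using dist distinct_cols_iff[OF A] jj by blast
    have "\<exists>l<m. G $$ (l,j) \<noteq> G $$ (l,j')"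
    proof (rule ccontr)
      assume "\<not> (\<exists>l<m. G $$ (l,j) \<noteq> G $$ (l,j'))"
      then have "col G j = col G j'" using Gc jj by (intro eq_vecI) auto
      then have "(B * G) $$ (i,j) = (B * G) $$ (i,j')" using Bc Gc i jj by simp
      then have "d * A $$ (i,j) = d * A $$ (i,j')" unfolding BG using A i jj by simp
      then show False using d0 i by simp
    qed
    then obtain l where l: "l < m" "G $$ (l,j) \<noteq> G $$ (l,j')" by blast
    then have "C $$ (l,j) \<noteq> C $$ (l,j')" unfolding C_def using jj dr0 by simp
    then show "\<exists>i<m. C $$ (i,j) \<noteq> C $$ (i,j')" using l by blast
  qed
  have C5: "\<forall>i<m. \<forall>j<n. \<exists>k::int. C $$ (i,j) = of_int k / of_nat \<Delta>"
  proof (intro allI impI)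
    fix i j assume ij: "i < m" "j < n"
    have "C $$ (i,j) = real_of_int (sgn d * G $$ (i,j)) / of_nat \<Delta>"
    proof (cases "d > 0")
      case True
      then have "real \<Delta> = dr" using absd unfolding dr_def by simp
      then show ?thesis unfolding C_def using ij True by simp
    next
      case False
      then have "real \<Delta> = - dr" using absd d0 unfolding dr_def by simp
      then show ?thesis unfolding C_def using ij False d0 by (simp add: sgn_if)
    qed
    then show "\<exists>k::int. C $$ (i,j) = of_int k / of_nat \<Delta>" by blast
  qed
  obtain R where R: "reps B R m" using reps_exists[OF Bc] d0 unfolding d_def by blast
  define \<phi> where "\<phi> = (\<lambda>r. vec m (\<lambda>i. real_of_int ((D *\<^sub>v r) $ i) / dr - of_int \<lfloor>real_of_int ((D *\<^sub>v r) $ i) / dr\<rfloor>))"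
  have "fv C ` {..<n} \<subseteq> \<phi> ` R"
  proof
    fix v assume "v \<in> fv C ` {..<n}"
    then obtain j where j: "j < n" and v: "v = fv C j" by blast
    have cA: "col A j \<in> carrier_vec m" using A by (simp add: carrier_vecI)
    obtain r z where r: "r \<in> R" and z: "z \<in> carrier_vec m" and az: "col A j = r + B *\<^sub>v z"
      using R cA unfolding reps_def by blast
    have rc: "r \<in> carrier_vec m" using R r unfolding reps_def by auto
    have "D *\<^sub>v col A j = D *\<^sub>v r + (D * B) *\<^sub>v z"
      unfolding az using mult_add_distrib_mat_vec[OF Dc rc mult_mat_vec_carrier[OF Bc z]]
        assoc_mult_mat_vec[OF Dc Bc z] by simp
    also have "(D * B) *\<^sub>v z = d \<cdot>\<^sub>v z"
    proof -
      have "d \<cdot>\<^sub>v z = d \<cdot>\<^sub>v (1\<^sub>m m *\<^sub>v z)" using z by auto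
      also have "\<dots> = (d \<cdot>\<^sub>m 1\<^sub>m m) *\<^sub>v z" using z by auto
      finally show ?thesis unfolding DB by simp
    qed
    finally have Dcol: "D *\<^sub>v col A j = D *\<^sub>v r + d \<cdot>\<^sub>v z" .
    have Gij: "G $$ (i,j) = (D *\<^sub>v r) $ i + d * z $ i" if i: "i < m" for i
    proof -
      have "G $$ (i,j) = (D *\<^sub>v col A j) $ i" unfolding G_def using i j Dc A by simp
      then show ?thesis unfolding Dcol using i Dc rc z by simp
    qed
    have "fv C j = \<phi> r"
    proof (rule eq_vecI)
      show "dim_vec (fv C j) = dim_vec (\<phi> r)" unfolding fv_def \<phi>_def using Cc by simp
      fix i assume "i < dim_vec (\<phi> r)"
      then have i: "i < m" unfolding \<phi>_def by simp
      define x where "x = real_of_int ((D *\<^sub>v r) $ i) / dr"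
      have Cij: "C $$ (i,j) = x + of_int (z $ i)" unfolding C_def x_def using i j Gij[OF i] dr0
        by (simp add: add_divide_distrib dr_def)
      have "\<lfloor>C $$ (i,j)\<rfloor> = \<lfloor>x\<rfloor> + z $ i" unfolding Cij by simp
      then show "fv C j $ i = \<phi> r $ i" unfolding fv_def \<phi>_def using i Cc Cij x_def by simp
    qed
    then show "v \<in> \<phi> ` R" using v r by blast
  qed
  then have "card (fv C ` {..<n}) \<le> card (\<phi> ` R)" by (rule card_mono[rotated]) (use R in \<open>auto simp: reps_def\<close>)
  also have "\<dots> \<le> card R" by (rule card_image_le) (use R in \<open>auto simp: reps_def\<close>)
  also have "\<dots> \<le> \<Delta>" using R absd unfolding reps_def d_def by simp
  finally have Ccard: "card (fv C ` {..<n}) \<le> \<Delta>" .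
  show ?thesis using Cc C1 CM Cdist C5 Ccard by blast
qed



lemma pick_singleton: "pick {i} 0 = i"
  by (rule pick_eqI) auto

lemma entry_bound:
  fixes C :: "real mat"
  assumes Cc: "C \<in> carrier_mat m n"
    and CM: "\<forall>I K. I \<subseteq> {..<m} \<longrightarrow> K \<subseteq> {..<n} \<longrightarrow> card I = card K \<longrightarrow> \<bar>det (submatrix C I K)\<bar> \<le> 1"
    and ij: "i < m" "j < n"
  shows "\<bar>C $$ (i,j)\<bar> \<le> 1"
proof -
  have S: "submatrix C {i} {j} \<in> carrier_mat 1 1" using submatrix_carrier'[OF Cc, of "{i}" "{j}"] ij by simp
  have c1: "card {a. a < dim_row C \<and> a \<in> {i}} = 1" using ij Cc by (subst sub_rows_eq) auto
  have c2: "card {a. a < dim_col C \<and> a \<in> {j}} = 1" using ij Cc by (subst sub_rows_eq) auto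
  have c1': "0 < card {a. a < dim_row C \<and> a \<in> {i}}" using c1 by simp
  have c2': "0 < card {a. a < dim_col C \<and> a \<in> {j}}" using c2 by simp
  have "submatrix C {i} {j} $$ (0,0) = C $$ (pick {i} 0, pick {j} 0)"
    by (rule submatrix_index[OF c1' c2'])
  then have "det (submatrix C {i} {j}) = C $$ (i,j)" using det_single[OF S] pick_singleton by simp
  moreover have "\<bar>det (submatrix C {i} {j})\<bar> \<le> 1" using CM[rule_format, of "{i}" "{j}"] ij by simp
  ultimately show ?thesis by simp
qed

lemma submatrix_map_mat: "submatrix (map_mat f M) I K = map_mat f (submatrix M I K)"
proof (rule eq_matI)
  fix i j assume i: "i < dim_row (map_mat f (submatrix M I K))" and j: "j < dim_col (map_mat f (submatrix M I K))"
  then have i': "i < card {a. a < dim_row M \<and> a \<in> I}" and j': "j < card {a. a < dim_col M \<and> a \<in> K}"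
    by (simp_all add: dim_submatrix)
  have "pick I i < dim_row M" by (rule pick_le[OF i'])
  moreover have "pick K j < dim_col M" by (rule pick_le[OF j'])
  ultimately show "submatrix (map_mat f M) I K $$ (i, j) = map_mat f (submatrix M I K) $$ (i, j)"
    using i' j' unfolding submatrix_def by simp
qed (simp_all add: dim_submatrix)

lemma count:
  fixes C :: "real mat"
  assumes Cc: "C \<in> carrier_mat m n" and m0: "m > 0" and J: "J \<subseteq> {..<n}" "card J = m"
    and C1: "\<forall>i<m. \<forall>r<m. C $$ (r, pick J i) = (if r = i then 1 else 0)"
    and CM: "\<forall>I K. I \<subseteq> {..<m} \<longrightarrow> K \<subseteq> {..<n} \<longrightarrow> card I = card K \<longrightarrow> \<bar>det (submatrix C I K)\<bar> \<le> 1"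
    and Cdist: "\<forall>j<n. \<forall>j'<n. j \<noteq> j' \<longrightarrow> (\<exists>i<m. C $$ (i,j) \<noteq> C $$ (i,j'))"
    and C5: "\<forall>i<m. \<forall>j<n. \<exists>k::int. C $$ (i,j) = of_int k / of_nat \<Delta>"
    and Ccard: "card (fv C ` {..<n}) \<le> \<Delta>"
    and \<Delta>0: "\<Delta> > 0"
  shows "enat n \<le> heller 1 m + enat (\<Delta> - 1) * refined_shifted_heller \<Delta> m"
proof -
  define T where "T = fv C ` {..<n}"
  define z0 where "z0 = (0\<^sub>v m :: real vec)"
  define S where "S = (\<lambda>t. {j. j < n \<and> fv C j = t})"
  have fvi: "fv C j $ i = C $$ (i,j) - of_int \<lfloor>C $$ (i,j)\<rfloor>" if "i < m" for i j
    using that Cc unfolding fv_def by simp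
  have fvd: "dim_vec (fv C j) = m" for j using Cc unfolding fv_def by simp
  have pJn: "pick J k < n" if "k < m" for k using pick_in_set_le[of k J] J that by auto
  have Jpick: "\<exists>k<m. pick J k = x" if "x \<in> J" for x
  proof -
    have "{a\<in>J. a < x} \<subset> J" using that by auto
    then have "card {a\<in>J. a < x} < m" using J psubset_card_mono[of J] finite_subset[OF J(1)] by auto
    then show ?thesis using pick_card_in_set[OF that] by blast
  qed
  have Jz: "fv C x = z0" if xJ: "x \<in> J" for x
  proof -
    obtain k where k: "k < m" "pick J k = x" using Jpick[OF xJ] by blast
    show ?thesis unfolding z0_def
    proof (rule eq_vecI)
      fix i assume "i < dim_vec (0\<^sub>v m :: real vec)"
      then have i: "i < m" by simp
      have "C $$ (i, x) = (if i = k then 1 else 0)" using C1 k i by auto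
      then show "fv C x $ i = (0\<^sub>v m :: real vec) $ i" using fvi[OF i] i by simp
    qed (simp add: fvd)
  qed
  have Sn: "S t \<subseteq> {..<n}" for t unfolding S_def by auto
  have finS: "finite (S t)" for t using Sn finite_subset by blast
  have finT: "finite T" unfolding T_def by simp
  have z0T: "z0 \<in> T" unfolding T_def using Jz[of "pick J 0"] pick_in_set_le[of 0 J] J m0 pJn[OF m0] by force
  have "{..<n} = (\<Union>t\<in>T. S t)" unfolding S_def T_def by auto
  then have "n = card (\<Union>t\<in>T. S t)" by (metis card_lessThan)
  also have "\<dots> = (\<Sum>t\<in>T. card (S t))"
    by (rule card_UN_disjoint) (use finT finS in \<open>auto simp: S_def\<close>)
  also have "\<dots> = card (S z0) + (\<Sum>t\<in>T - {z0}. card (S t))"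
    by (rule sum.remove[OF finT z0T])
  finally have nsum: "n = card (S z0) + (\<Sum>t\<in>T - {z0}. card (S t))" .
  have zero_class: "enat (card (S z0)) \<le> heller 1 m"
  proof -
    define S0 where "S0 = S z0"
    have S0n: "S0 \<subseteq> {..<n}" unfolding S0_def by (rule Sn)
    have finS0: "finite S0" unfolding S0_def by (rule finS)
    have JS0: "J \<subseteq> S0" unfolding S0_def S_def using Jz J by auto
    have mS0: "m \<le> card S0" using card_mono[OF finS0 JS0] J by simp
    have intC: "C $$ (i,j) = of_int \<lfloor>C $$ (i,j)\<rfloor>" if ij: "i < m" "j \<in> S0" for i j
    proof -
      have "fv C j = z0" using ij unfolding S0_def S_def by auto
      then have "fv C j $ i = 0" using ij unfolding z0_def by simp
      then show ?thesis using fvi[OF ij(1)] by simp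
    qed
    have pS0: "pick S0 k \<in> S0" if "k < card S0" for k using pick_in_set_le[OF that] .
    define X0 where "X0 = mat m (card S0) (\<lambda>(i,k). \<lfloor>C $$ (i, pick S0 k)\<rfloor>)"
    have X0c: "X0 \<in> carrier_mat m (card S0)" unfolding X0_def by simp
    have mapX0: "map_mat real_of_int X0 = mat m (card S0) (\<lambda>(i,k). C $$ (i, pick S0 k))"
      unfolding X0_def by (rule eq_matI) (auto simp: intC[OF _ pS0, symmetric])
    have detX: "real_of_int (det (submatrix X0 {..<m} K)) = det (submatrix C {..<m} (pick S0 ` K))"
      if K: "K \<subseteq> {..<card S0}" for K
    proof -
      have "real_of_int (det (submatrix X0 {..<m} K)) = det (map_mat real_of_int (submatrix X0 {..<m} K))"
        by simp
      also have "map_mat real_of_int (submatrix X0 {..<m} K) = submatrix (map_mat real_of_int X0) {..<m} K"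
        by (simp add: submatrix_map_mat)
      also have "\<dots> = submatrix C {..<m} (pick S0 ` K)" unfolding mapX0
        by (rule submatrix_compose[OF Cc S0n _ K]) simp
      finally show ?thesis .
    qed
    define SX where "SX = {\<bar>det (submatrix X0 I K)\<bar> | I K. I \<subseteq> {..<dim_row X0} \<and> K \<subseteq> {..<dim_col X0} \<and> card I = m \<and> card K = m}"
    have "SX \<subseteq> (\<lambda>(I,K). \<bar>det (submatrix X0 I K)\<bar>) ` (Pow {..<m} \<times> Pow {..<card S0})"
      unfolding SX_def using X0c by auto
    then have finSX: "finite SX" by (rule finite_subset) auto
    have le1: "y \<le> 1" if y: "y \<in> SX" for y
    proof -
      obtain I K where IK: "I \<subseteq> {..<m}" "K \<subseteq> {..<card S0}" "card I = m" "card K = m"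
        and yv: "y = \<bar>det (submatrix X0 I K)\<bar>" using y X0c unfolding SX_def by auto
      have Im: "I = {..<m}" using IK by (intro card_subset_eq) auto
      have cK: "card (pick S0 ` K) = m" using card_pick_image[OF IK(2)] IK by simp
      have Kn: "pick S0 ` K \<subseteq> {..<n}" using pick_image_subset[OF IK(2)] S0n by auto
      have "\<bar>det (submatrix C {..<m} (pick S0 ` K))\<bar> \<le> 1" using CM Kn cK by auto
      then have "\<bar>real_of_int (det (submatrix X0 {..<m} K))\<bar> \<le> 1" using detX[OF IK(2)] by simp
      then show ?thesis unfolding yv Im by linarith
    qed
    have in1: "1 \<in> SX"
    proof -
      define K0 where "K0 = {k. k < card S0 \<and> pick S0 k \<in> J}"
      have K0: "K0 \<subseteq> {..<card S0}" unfolding K0_def by auto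
      have imK0: "pick S0 ` K0 = J"
      proof
        show "pick S0 ` K0 \<subseteq> J" unfolding K0_def by auto
        show "J \<subseteq> pick S0 ` K0"
        proof
          fix x assume xJ: "x \<in> J"
          then have xS: "x \<in> S0" using JS0 by auto
          have "{a\<in>S0. a < x} \<subset> S0" using xS by auto
          then have lt: "card {a\<in>S0. a < x} < card S0" by (rule psubset_card_mono[OF finS0])
          have "pick S0 (card {a\<in>S0. a < x}) = x" by (rule pick_card_in_set[OF xS])
          then show "x \<in> pick S0 ` K0" unfolding K0_def using lt xJ by (metis (mono_tags, lifting) image_eqI mem_Collect_eq)
        qed
      qed
      have cK0: "card K0 = m" using card_pick_image[OF K0] imK0 J by simp
      have "submatrix C {..<m} J = 1\<^sub>m m"
        unfolding subm_rows_all[OF Cc J(1)] J(2) by (rule eq_matI) (use C1 in auto)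
      then have "real_of_int (det (submatrix X0 {..<m} K0)) = 1" using detX[OF K0] imK0 by simp
      then have "det (submatrix X0 {..<m} K0) = 1" by simp
      then have "\<bar>det (submatrix X0 {..<m} K0)\<bar> = 1" by simp
      moreover have "{..<m} \<subseteq> {..<dim_row X0}" "K0 \<subseteq> {..<dim_col X0}" using X0c K0 by auto
      ultimately show ?thesis unfolding SX_def using cK0 by (metis (mono_tags, lifting) card_lessThan mem_Collect_eq)
    qed
    have DX: "Delta_k m X0 = int 1" unfolding Delta_k_def SX_def[symmetric]
      using Max_eqI[OF finSX le1 in1] by simp
    have distX: "distinct (cols X0)" unfolding distinct_cols_iff[OF X0c]
    proof (intro allI impI)
      fix k k' assume kk: "k < card S0" "k' < card S0" "k \<noteq> k'"
      have "pick S0 k \<noteq> pick S0 k'" using pick_inj[of S0] kk unfolding inj_on_def by auto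
      moreover have "pick S0 k < n" "pick S0 k' < n" using pS0 kk S0n by auto
      ultimately obtain i where i: "i < m" "C $$ (i, pick S0 k) \<noteq> C $$ (i, pick S0 k')" using Cdist by blast
      then have "\<lfloor>C $$ (i, pick S0 k)\<rfloor> \<noteq> \<lfloor>C $$ (i, pick S0 k')\<rfloor>"
        using intC[OF i(1) pS0[OF kk(1)]] intC[OF i(1) pS0[OF kk(2)]] by metis
      then show "\<exists>i<m. X0 $$ (i, k) \<noteq> X0 $$ (i, k')" using i kk unfolding X0_def by auto
    qed
    have "enat (card S0) \<in> {enat n | n. \<exists>A :: int mat. A \<in> carrier_mat m n \<and> m \<le> n \<and>
       distinct (cols A) \<and> Delta_k m A = int 1}" using X0c mS0 distX DX by blast
    then show ?thesis unfolding heller_def S0_def[symmetric] by (rule Sup_upper)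
  qed
  have nz_class: "enat (card (S t)) \<le> refined_shifted_heller \<Delta> m" if t: "t \<in> T - {z0}" for t
  proof -
    obtain j0 where j0: "j0 < n" "t = fv C j0" using t unfolding T_def by auto
    define St where "St = S t"
    have Stn: "St \<subseteq> {..<n}" unfolding St_def by (rule Sn)
    have pSt: "pick St k \<in> St" if "k < card St" for k using pick_in_set_le[OF that] .
    have pStn: "pick St k < n" if "k < card St" for k using pSt[OF that] Stn by auto
    have tC: "t $ i = C $$ (i,j) - of_int \<lfloor>C $$ (i,j)\<rfloor>" if ij: "i < m" "j \<in> St" for i j
    proof -
      have "fv C j = t" using ij unfolding St_def S_def by auto
      then show ?thesis using fvi[OF ij(1), of j] by simp
    qed
    define X where "X = mat m (card St) (\<lambda>(i,k). C $$ (i, pick St k) - t $ i)"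
    have Xc: "X \<in> carrier_mat m (card St)" unfolding X_def by simp
    have tc: "t \<in> carrier_vec m" by (rule carrier_vecI) (simp only: j0(2) fvd)
    have tb: "\<forall>i<m. 0 \<le> t $ i \<and> t $ i < 1"
    proof (intro allI impI)
      fix i assume i: "i < m"
      have "t $ i = C $$ (i,j0) - of_int \<lfloor>C $$ (i,j0)\<rfloor>" using fvi[OF i] j0 by simp
      moreover have "of_int \<lfloor>C $$ (i,j0)\<rfloor> \<le> C $$ (i,j0)" by (rule of_int_floor_le)
      moreover have "C $$ (i,j0) < of_int \<lfloor>C $$ (i,j0)\<rfloor> + 1" by (rule real_of_int_floor_add_one_gt)
      ultimately show "0 \<le> t $ i \<and> t $ i < 1" by linarith
    qed
    have t0: "t \<noteq> 0\<^sub>v m" using t unfolding z0_def by auto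
    have tP: "\<forall>i<dim_vec t. \<exists>k::int. t $ i = of_int k / of_nat \<Delta>"
    proof (intro allI impI)
      fix i assume "i < dim_vec t"
      then have i: "i < m" using tc by simp
      obtain k where k: "C $$ (i,j0) = of_int k / of_nat \<Delta>" using C5 i j0 by blast
      have "t $ i = C $$ (i,j0) - of_int \<lfloor>C $$ (i,j0)\<rfloor>" using fvi[OF i] j0 by simp
      also have "\<dots> = of_int (k - \<lfloor>C $$ (i,j0)\<rfloor> * int \<Delta>) / of_nat \<Delta>"
        unfolding k using \<Delta>0 by (simp add: field_simps)
      finally show "\<exists>k::int. t $ i = of_int k / of_nat \<Delta>" by blast
    qed
    have Xent: "\<forall>i<m. \<forall>k<card St. X $$ (i,k) \<in> {-1, 0, 1}"
    proof (intro allI impI)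
      fix i k assume i: "i < m" and k: "k < card St"
      have "X $$ (i,k) = of_int \<lfloor>C $$ (i, pick St k)\<rfloor>" unfolding X_def using i k tC[OF i pSt[OF k]] by simp
      moreover have "\<bar>C $$ (i, pick St k)\<bar> \<le> 1" by (rule entry_bound[OF Cc CM i pStn[OF k]])
      then have b1: "- 1 \<le> C $$ (i, pick St k)" "C $$ (i, pick St k) \<le> 1" by (simp_all add: abs_le_iff)
      have f1: "- 1 \<le> \<lfloor>C $$ (i, pick St k)\<rfloor>" using b1(1) by (simp add: le_floor_iff)
      have f2: "\<lfloor>C $$ (i, pick St k)\<rfloor> \<le> 1" using b1(2) by (simp add: floor_le_iff)
      have "\<lfloor>C $$ (i, pick St k)\<rfloor> = -1 \<or> \<lfloor>C $$ (i, pick St k)\<rfloor> = 0 \<or> \<lfloor>C $$ (i, pick St k)\<rfloor> = 1"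
        using f1 f2 by linarith
      then have "\<lfloor>C $$ (i, pick St k)\<rfloor> \<in> {-1, 0, 1}" by blast
      ultimately show "X $$ (i,k) \<in> {-1, 0, 1}" by auto
    qed
    have distX: "distinct (cols X)" unfolding distinct_cols_iff[OF Xc]
    proof (intro allI impI)
      fix k k' assume kk: "k < card St" "k' < card St" "k \<noteq> k'"
      have "pick St k \<noteq> pick St k'" using pick_inj[of St] kk unfolding inj_on_def by auto
      then obtain i where i: "i < m" "C $$ (i, pick St k) \<noteq> C $$ (i, pick St k')"
        using Cdist pStn kk by blast
      then show "\<exists>i<m. X $$ (i, k) \<noteq> X $$ (i, k')" using kk unfolding X_def by auto
    qed
    have shX: "shift_mat t X = mat m (card St) (\<lambda>(i,k). C $$ (i, pick St k))"
      unfolding shift_mat_def X_def by (rule eq_matI) auto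
    have tot: "totally_1_submodular (shift_mat t X)"
      unfolding totally_1_submodular_def
    proof (intro allI impI)
      fix I K assume I: "I \<subseteq> {..<dim_row (shift_mat t X)}" and K: "K \<subseteq> {..<dim_col (shift_mat t X)}"
        and cIK: "card I = card K"
      have I': "I \<subseteq> {..<m}" and K': "K \<subseteq> {..<card St}" using I K unfolding shX by auto
      have "submatrix (shift_mat t X) I K = submatrix C I (pick St ` K)"
        unfolding shX by (rule submatrix_compose[OF Cc Stn I' K'])
      moreover have "pick St ` K \<subseteq> {..<n}" using pick_image_subset[OF K'] Stn by auto
      moreover have "card I = card (pick St ` K)" using card_pick_image[OF K'] cIK by simp
      ultimately show "\<bar>det (submatrix (shift_mat t X) I K)\<bar> \<le> 1" using CM I' by auto
    qed
    have adm: "shifted_admissible (\<lambda>t. \<forall>i<dim_vec t. \<exists>k::int. t $ i = of_int k / of_nat \<Delta>) m (card St)"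
      unfolding shifted_admissible_def
      apply (rule exI[of _ t], rule exI[of _ X])
      apply (intro conjI)
             apply (fact tc)
            apply (fact tb)
           apply (fact t0)
          apply (use tP in simp)
         apply (fact Xc)
        apply (fact Xent)
       apply (fact distX)
      apply (fact tot)
      done
    then have "enat (card St) \<in> {enat n | n. shifted_admissible
      (\<lambda>t. \<forall>i<dim_vec t. \<exists>k::int. t $ i = of_int k / of_nat \<Delta>) m n}" by blast
    then show ?thesis unfolding refined_shifted_heller_def St_def[symmetric] by (rule Sup_upper)
  qed
  have cT: "card (T - {z0}) \<le> \<Delta> - 1" using Ccard z0T finT unfolding T_def[symmetric] by (simp add: card_Diff_singleton)
  have "enat n = enat (card (S z0)) + (\<Sum>t\<in>T - {z0}. enat (card (S t)))"
    unfolding nsum by (simp add: of_nat_eq_enat[symmetric])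
  also have "\<dots> \<le> heller 1 m + of_nat (card (T - {z0})) * refined_shifted_heller \<Delta> m"
    by (intro add_mono zero_class sum_bounded_above nz_class)
  also have "of_nat (card (T - {z0})) * refined_shifted_heller \<Delta> m \<le> enat (\<Delta> - 1) * refined_shifted_heller \<Delta> m"
    unfolding of_nat_eq_enat using cT by (simp add: mult_right_mono)
  finally show ?thesis by (simp add: add_left_mono)
qed


lemma heller_bound:
  fixes \<Delta> m :: nat
  assumes "\<Delta> > 0" and "m > 0"
  shows "heller \<Delta> m \<le> heller 1 m + enat (\<Delta> - 1) * refined_shifted_heller \<Delta> m"
proof -
  have eq: "heller \<Delta> m = Sup {enat n | n. \<exists>A :: int mat. A \<in> carrier_mat m n \<and> m \<le> n \<and>
       distinct (cols A) \<and> Delta_k m A = int \<Delta>}" by (simp only: heller_def)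
  show ?thesis unfolding eq
  proof (rule Sup_least)
    fix x assume "x \<in> {enat n | n. \<exists>A :: int mat. A \<in> carrier_mat m n \<and> m \<le> n \<and>
       distinct (cols A) \<and> Delta_k m A = int \<Delta>}"
    then obtain n A where x: "x = enat n" and A: "A \<in> carrier_mat m n" and mn: "m \<le> n"
      and dist: "distinct (cols A)" and DA: "Delta_k m A = int \<Delta>" by blast
    obtain J where J: "J \<subseteq> {..<n}" "card J = m" and BJ: "\<bar>det (submatrix A {..<m} J)\<bar> = int \<Delta>"
      using main_setup(1)[OF A mn DA] by blast
    have bnd: "\<And>K. K \<subseteq> {..<n} \<Longrightarrow> card K = m \<Longrightarrow> \<bar>det (submatrix A {..<m} K)\<bar> \<le> int \<Delta>"
      using main_setup(2)[OF A mn DA] by blast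
    obtain C where C: "C \<in> carrier_mat m n"
      "\<forall>i<m. \<forall>r<m. C $$ (r, pick J i) = (if r = i then 1 else 0)"
      "\<forall>I K. I \<subseteq> {..<m} \<longrightarrow> K \<subseteq> {..<n} \<longrightarrow> card I = card K \<longrightarrow> \<bar>det (submatrix C I K)\<bar> \<le> 1"
      "\<forall>j<n. \<forall>j'<n. j \<noteq> j' \<longrightarrow> (\<exists>i<m. C $$ (i,j) \<noteq> C $$ (i,j'))"
      "\<forall>i<m. \<forall>j<n. \<exists>k::int. C $$ (i,j) = of_int k / of_nat \<Delta>"
      "card (fv C ` {..<n}) \<le> \<Delta>"
      using core[OF A assms(2) dist J BJ bnd assms(1)] by blast
    show "x \<le> heller 1 m + enat (\<Delta> - 1) * refined_shifted_heller \<Delta> m"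
      unfolding x by (rule count[OF C(1) assms(2) J C(2-6) assms(1)])
  qed
qed

lemma refined_le_shifted: "refined_shifted_heller \<delta> m \<le> shifted_heller m"
  unfolding refined_shifted_heller_def shifted_heller_def
  by (rule Sup_subset_mono) (auto simp: shifted_admissible_def)

theorem lemma2p3:
  fixes \<Delta> m :: nat
  assumes "\<Delta> > 0" and "m > 0"
  shows "heller \<Delta> m \<le> heller 1 m + enat (\<Delta> - 1) * refined_shifted_heller \<Delta> m
       \<and> heller \<Delta> m \<le> heller 1 m + enat (\<Delta> - 1) * shifted_heller m"
proof
  show h: "heller \<Delta> m \<le> heller 1 m + enat (\<Delta> - 1) * refined_shifted_heller \<Delta> m"
    by (rule heller_bound[OF assms])
  have "enat (\<Delta> - 1) * refined_shifted_heller \<Delta> m \<le> enat (\<Delta> - 1) * shifted_heller m"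
    by (rule mult_left_mono[OF refined_le_shifted]) simp
  then show "heller \<Delta> m \<le> heller 1 m + enat (\<Delta> - 1) * shifted_heller m"
    using h by (meson add_left_mono order_trans)
qed

end
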